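(* Let $1\le s<\infty$, $r>1$, and let $G_1,\dots,G_m\subset\mathbb{R}^n$ be bounded $L^s(\mu)$-averaging domains such that $\bigcup_{i=1}^mG_i$ is connected, where $d\mu=w(z)\,dz$ with $w\in A_r\big(\bigcup_{i=1}^mG_i\big)$. Then $\bigcup_{i=1}^mG_i$ is an $L^s(\mu)$-averaging domain.
   Context: A weight $w\ge0$ satisfies the $A_r$ condition on a domain $\Omega$ ($r>1$), written $w\in A_r(\Omega)$, if $\sup_{B\subset\Omega}\left(\frac{1}{|B|}\int_Bw\,dz\right)\left(\frac{1}{|B|}\int_Bw^{\frac{1}{1-r}}\,dz\right)^{r-1}<\infty$, the supremum over balls $B\subset\Omega$. The measure $\mu$ is $d\mu=w\,dz$. A bounded domain $\Omega$ is $L^s(\mu)$-averaging if there is a constant $C$ such that for all $u\in L^1_{\mathrm{loc}}(\Omega,\mu)$, $\left(\frac{1}{\mu(\Omega)}\int_\Omega|u-u_{\Omega}|^s\,d\mu\right)^{1/s}\le C\left(\sup_{B\subset\Omega}\frac{1}{\mu(B)}\int_B|u-u_B|^s\,d\mu\right)^{1/s}$, where $B$ ranges over open balls in $\Omega$ and $u_E=\frac{1}{\mu(E)}\int_Eu\,d\mu$. *)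

theory Defs
  imports "HOL-Analysis.Analysis"
begin

definition balls_in :: "'a::euclidean_space set \<Rightarrow> 'a set set" where
  "balls_in \<Omega> = {ball c \<rho> | c \<rho>. 0 < \<rho> \<and> ball c \<rho> \<subseteq> \<Omega>}"

definition leb_avg :: "('a::euclidean_space \<Rightarrow> real) \<Rightarrow> 'a set \<Rightarrow> real" where
  "leb_avg f B = (\<integral>x\<in>B. f x \<partial>lebesgue) / measure lebesgue B"

definition A_r_weight :: "real \<Rightarrow> 'a::euclidean_space set \<Rightarrow> ('a \<Rightarrow> real) \<Rightarrow> bool" where
  "A_r_weight r \<Omega> w \<longleftrightarrow>
     (\<forall>x\<in>\<Omega>. 0 \<le> w x) \<and> (AE x in lebesgue. x \<in> \<Omega> \<longrightarrow> 0 < w x) \<and>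
     (\<forall>B\<in>balls_in \<Omega>. set_integrable lebesgue B w \<and>
                       set_integrable lebesgue B (\<lambda>x. w x powr (1 / (1 - r)))) \<and>
     bdd_above ((\<lambda>B. leb_avg w B * (leb_avg (\<lambda>x. w x powr (1 / (1 - r))) B) powr (r - 1))
                ` balls_in \<Omega>)"

definition weighted_measure :: "'a::euclidean_space set \<Rightarrow> ('a \<Rightarrow> real) \<Rightarrow> 'a measure" where
  "weighted_measure \<Omega> w = density lebesgue (\<lambda>x. ennreal (indicator \<Omega> x * w x))"

definition mu_avg :: "'a measure \<Rightarrow> ('a \<Rightarrow> real) \<Rightarrow> 'a set \<Rightarrow> real" where
  "mu_avg M u E = (\<integral>x\<in>E. u x \<partial>M) / measure M E"

definition mu_osc :: "'a measure \<Rightarrow> real \<Rightarrow> ('a \<Rightarrow> real) \<Rightarrow> 'a set \<Rightarrow> ennreal" where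
  "mu_osc M s u E = (\<integral>\<^sup>+x\<in>E. ennreal (\<bar>u x - mu_avg M u E\<bar> powr s) \<partial>M) / emeasure M E"

definition loc_integrable :: "'a measure \<Rightarrow> 'a::euclidean_space set \<Rightarrow> ('a \<Rightarrow> real) \<Rightarrow> bool" where
  "loc_integrable M \<Omega> u \<longleftrightarrow> (\<forall>K. compact K \<and> K \<subseteq> \<Omega> \<longrightarrow> set_integrable M K u)"

text \<open>Bounded L^s(\<mu>)-averaging domain.  The defining inequality
  (A)^(1/s) \<le> C (S)^(1/s) is written in the equivalent form A \<le> C^s S (C \<ge> 0).\<close>
definition Ls_averaging_domain :: "'a measure \<Rightarrow> real \<Rightarrow> 'a::euclidean_space set \<Rightarrow> bool" where
  "Ls_averaging_domain M s \<Omega> \<longleftrightarrow>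
     open \<Omega> \<and> connected \<Omega> \<and> \<Omega> \<noteq> {} \<and> bounded \<Omega> \<and>
     (\<exists>C::real. 0 \<le> C \<and> (\<forall>u. loc_integrable M \<Omega> u \<longrightarrow>
        mu_osc M s u \<Omega> \<le> ennreal (C powr s) * (SUP B\<in>balls_in \<Omega>. mu_osc M s u B)))"

end

theory Submission
  imports Defs
begin

lemma tangent_powr:
  fixes s y t :: real
  assumes s: "1 \<le> s" and y: "0 \<le> y" and t: "0 \<le> t"
  shows "t powr s + s * t powr (s - 1) * (y - t) \<le> y powr s"
proof (cases "t = 0")
  case True
  then show ?thesis using y by simp
next
  case False
  then have tpos: "0 < t" using t by simp
  have tt: "t powr (s - 1) * t = t powr s"
    using tpos by (simp add: powr_diff)
  show ?thesis
  proof (cases "y = 0")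
    case True
    have "t powr s + s * t powr (s - 1) * (y - t) = (1 - s) * t powr s"
      using tt True by (simp add: algebra_simps)
    also have "\<dots> \<le> 0" using s by (intro mult_nonpos_nonneg) auto
    finally show ?thesis using True by simp
  next
    case False
    then have ypos: "0 < y" using y by simp
    have "(\<lambda>x. x powr s) y - (\<lambda>x. x powr s) t \<ge> (s * t powr (s - 1)) * (y - t)"
    proof (rule convex_on_imp_above_tangent[where A = "{0<..}"])
      show "convex_on {0<..} (\<lambda>x. x powr s)" using powr_convex s by blast
      show "connected {0::real<..}" by simp
      show "t \<in> interior {0<..}" using tpos by (simp add: interior_open)
      show "y \<in> {0<..}" using ypos by simp
      have "((\<lambda>x. x powr s) has_real_derivative s * t powr (s - 1)) (at t)"
        using has_real_derivative_powr[OF tpos] by simp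
      then show "((\<lambda>x. x powr s) has_field_derivative s * t powr (s - 1)) (at t within {0<..})"
        by (rule has_field_derivative_at_within)
    qed
    then show ?thesis by simp
  qed
qed

lemma convex2_powr:
  fixes s a b c :: real
  assumes s: "1 \<le> s"
  shows "\<bar>a - b\<bar> powr s \<le> 2 powr (s - 1) * (\<bar>a - c\<bar> powr s + \<bar>c - b\<bar> powr s)"
proof -
  define x where "x = \<bar>a - c\<bar>"
  define y where "y = \<bar>c - b\<bar>"
  have x0: "0 \<le> x" and y0: "0 \<le> y" by (auto simp: x_def y_def)
  have two: "2 \<le> (2::real) powr s" using s powr_mono[of 1 s 2] by simp
  have mid: "((x + y) / 2) powr s \<le> (x powr s + y powr s) / 2"
  proof (cases "x = 0 \<or> y = 0")
    case True
    have half: "(z / 2) powr s \<le> z powr s / 2" if "0 \<le> z" for z :: real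
    proof -
      have "(z / 2) powr s = z powr s / 2 powr s" using that by (simp add: powr_divide)
      also have "\<dots> \<le> z powr s / 2"
        using two by (intro divide_left_mono) auto
      finally show ?thesis .
    qed
    from True show ?thesis
    proof
      assume h: "x = 0"
      show ?thesis using half[OF y0] h s by simp
    next
      assume h: "y = 0"
      show ?thesis using half[OF x0] h s by simp
    qed
  next
    case False
    then have xy: "x \<in> {0<..}" "y \<in> {0<..}" using x0 y0 by auto
    have "((1 - 1/2) *\<^sub>R x + (1/2) *\<^sub>R y) powr s \<le> (1 - 1/2) * x powr s + (1/2) * y powr s"
      using convex_onD[OF powr_convex[OF s], of "1/2" x y] xy by simp
    moreover have "(1 - 1/2) *\<^sub>R x + (1/2) *\<^sub>R y = (x + y) / 2" by simp
    moreover have "(1 - 1/2) * x powr s + (1/2) * y powr s = (x powr s + y powr s) / 2" by simp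
    ultimately show ?thesis by metis
  qed
  have "\<bar>a - b\<bar> powr s \<le> (x + y) powr s"
    unfolding x_def y_def by (intro powr_mono2) (use s in auto)
  also have "(x + y) = 2 * ((x + y) / 2)" by simp
  also have "(2 * ((x + y) / 2)) powr s = 2 powr s * ((x + y) / 2) powr s"
    using powr_mult[of 2 "(x+y)/2" s] x0 y0 by simp
  also have "\<dots> \<le> 2 powr s * ((x powr s + y powr s) / 2)"
    by (intro mult_left_mono mid) auto
  also have "\<dots> = 2 powr (s - 1) * (x powr s + y powr s)"
    by (simp add: powr_diff)
  finally show ?thesis unfolding x_def y_def .
qed

lemma set_integrable_const_real:
  fixes c :: real
  assumes "A \<in> sets M" "emeasure M A < \<infinity>"
  shows "set_integrable M A (\<lambda>_. c)"
  unfolding set_integrable_def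
  using integrable_mult_right[OF integrable_real_indicator[OF assms], of c]
  by (simp add: mult.commute)

lemma le_one_plus_powr:
  fixes z s :: real
  assumes "0 \<le> z" "1 \<le> s"
  shows "z \<le> 1 + z powr s"
proof (cases "z \<le> 1")
  case True then show ?thesis by (smt (verit) powr_ge_zero)
next
  case False
  then have "z powr 1 \<le> z powr s" using assms by (intro powr_mono) auto
  then show ?thesis using False by simp
qed

lemma integrable_from_Ls:
  fixes u :: "'a \<Rightarrow> real"
  assumes s: "1 \<le> s" and u[measurable]: "u \<in> borel_measurable M" and A[measurable]: "A \<in> sets M"
    and fin: "emeasure M A < \<infinity>"
    and Ls: "(\<integral>\<^sup>+x\<in>A. ennreal (\<bar>u x - c\<bar> powr s) \<partial>M) < \<infinity>"
  shows "set_integrable M A u"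
  unfolding set_integrable_def
proof (rule integrableI_bounded)
  show "(\<lambda>x. indicator A x *\<^sub>R u x) \<in> borel_measurable M" by measurable
  have "(\<integral>\<^sup>+x. ennreal (norm (indicator A x *\<^sub>R u x)) \<partial>M)
      \<le> (\<integral>\<^sup>+x. ennreal (\<bar>c\<bar> + 1) * indicator A x + ennreal (\<bar>u x - c\<bar> powr s) * indicator A x \<partial>M)"
  proof (rule nn_integral_mono)
    fix x
    have "\<bar>u x\<bar> \<le> \<bar>c\<bar> + 1 + \<bar>u x - c\<bar> powr s"
      using le_one_plus_powr[of "\<bar>u x - c\<bar>" s] s by linarith
    then show "ennreal (norm (indicator A x *\<^sub>R u x))
        \<le> ennreal (\<bar>c\<bar> + 1) * indicator A x + ennreal (\<bar>u x - c\<bar> powr s) * indicator A x"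
      by (cases "x \<in> A") (auto simp: ennreal_plus[symmetric] simp del: ennreal_plus)
  qed
  also have "\<dots> = ennreal (\<bar>c\<bar> + 1) * emeasure M A + (\<integral>\<^sup>+x\<in>A. ennreal (\<bar>u x - c\<bar> powr s) \<partial>M)"
    by (subst nn_integral_add) (auto simp: nn_integral_cmult_indicator)
  also have "\<dots> < \<infinity>"
    using fin Ls by (simp add: ennreal_mult_less_top)
  finally show "(\<integral>\<^sup>+x. ennreal (norm (indicator A x *\<^sub>R u x)) \<partial>M) < \<infinity>" .
qed

lemma jensen_set:
  fixes u :: "'a \<Rightarrow> real"
  assumes s: "1 \<le> s" and u[measurable]: "u \<in> borel_measurable M" and A[measurable]: "A \<in> sets M"
    and fin: "emeasure M A < \<infinity>" and pos: "0 < emeasure M A"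
    and int: "set_integrable M A u"
  shows "ennreal (\<bar>mu_avg M u A - c\<bar> powr s) * emeasure M A
           \<le> (\<integral>\<^sup>+x\<in>A. ennreal (\<bar>u x - c\<bar> powr s) \<partial>M)"
proof (cases "(\<integral>\<^sup>+x\<in>A. ennreal (\<bar>u x - c\<bar> powr s) \<partial>M) = \<infinity>")
  case True then show ?thesis by simp
next
  case False
  define f where "f x = \<bar>u x - c\<bar> powr s" for x
  define mA where "mA = measure M A"
  have eA: "emeasure M A = ennreal mA"
    using fin by (simp add: mA_def emeasure_eq_ennreal_measure)
  have mA0: "0 < mA" using pos eA by simp
  have finne: "emeasure M A \<noteq> \<infinity>" using fin by simp
  have f0: "0 \<le> f x" for x by (simp add: f_def)
  have fm[measurable]: "f \<in> borel_measurable M" unfolding f_def by measurable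
  have nnf: "(\<integral>\<^sup>+x. ennreal (norm (indicator A x *\<^sub>R f x)) \<partial>M) = (\<integral>\<^sup>+x\<in>A. ennreal (\<bar>u x - c\<bar> powr s) \<partial>M)"
    by (rule nn_integral_cong) (auto simp: f_def split: split_indicator)
  have intf: "set_integrable M A f"
    unfolding set_integrable_def
    by (rule integrableI_bounded) (use False nnf in \<open>auto simp: top.not_eq_extremum\<close>)
  have RHS: "(\<integral>\<^sup>+x\<in>A. ennreal (\<bar>u x - c\<bar> powr s) \<partial>M) = ennreal (LINT x:A|M. f x)"
  proof -
    have "(\<integral>\<^sup>+x\<in>A. ennreal (\<bar>u x - c\<bar> powr s) \<partial>M) = (\<integral>\<^sup>+x. ennreal (indicator A x *\<^sub>R f x) \<partial>M)"
      by (rule nn_integral_cong) (auto simp: f_def split: split_indicator)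
    also have "\<dots> = ennreal (LINT x:A|M. f x)"
      unfolding set_lebesgue_integral_def
      by (rule nn_integral_eq_integral) (use intf f0 in \<open>auto simp: set_integrable_def\<close>)
    finally show ?thesis .
  qed
  have intc: "set_integrable M A (\<lambda>_. c)" by (rule set_integrable_const_real) (use fin in auto)
  have int1: "set_integrable M A (\<lambda>x. u x - c)" using int intc by auto
  have int2: "set_integrable M A (\<lambda>x. \<bar>u x - c\<bar>)" using set_integrable_abs[OF int1] .
  define t where "t = (LINT x:A|M. \<bar>u x - c\<bar>) / mA"
  have t0: "0 \<le> t" unfolding t_def
    by (intro divide_nonneg_pos mA0) (auto simp: set_lebesgue_integral_def intro!: Bochner_Integration.integral_nonneg)
  have Lt: "(LINT x:A|M. \<bar>u x - c\<bar>) = mA * t" using mA0 by (simp add: t_def)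
  have constI: "(LINT x:A|M. c) = mA * c"
    using set_integral_const[OF A finne, of c] by (simp add: mA_def)
  have avg: "mu_avg M u A - c = (LINT x:A|M. u x - c) / mA"
    using int intc mA0 constI by (simp add: mu_avg_def mA_def[symmetric] field_simps)
  have "\<bar>LINT x:A|M. u x - c\<bar> \<le> (LINT x:A|M. \<bar>u x - c\<bar>)"
  proof -
    have "(LINT x:A|M. u x - c) \<le> (LINT x:A|M. \<bar>u x - c\<bar>)"
      by (rule set_integral_mono[OF int1 int2]) auto
    moreover have "(LINT x:A|M. c - u x) \<le> (LINT x:A|M. \<bar>u x - c\<bar>)"
      by (rule set_integral_mono[OF set_integral_diff(1)[OF intc int] int2]) auto
    moreover have "(LINT x:A|M. c - u x) = (LINT x:A|M. c) - (LINT x:A|M. u x)"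
      by (rule set_integral_diff(2)[OF intc int])
    moreover have "(LINT x:A|M. u x - c) = (LINT x:A|M. u x) - (LINT x:A|M. c)"
      by (rule set_integral_diff(2)[OF int intc])
    ultimately show ?thesis by linarith
  qed
  then have avgt: "\<bar>mu_avg M u A - c\<bar> \<le> t"
    using mA0 unfolding avg t_def by (simp add: divide_right_mono)
  define \<alpha> where "\<alpha> = t powr s - s * t powr (s - 1) * t"
  define \<beta> where "\<beta> = s * t powr (s - 1)"
  have intl: "set_integrable M A (\<lambda>x. \<alpha> + \<beta> * \<bar>u x - c\<bar>)"
    using set_integrable_const_real[OF A fin, of \<alpha>] int2 by auto
  have "(LINT x:A|M. \<alpha> + \<beta> * \<bar>u x - c\<bar>) \<le> (LINT x:A|M. f x)"
  proof (rule set_integral_mono[OF intl intf])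
    fix x
    show "\<alpha> + \<beta> * \<bar>u x - c\<bar> \<le> f x"
      using tangent_powr[OF s _ t0, of "\<bar>u x - c\<bar>"] unfolding \<alpha>_def \<beta>_def f_def
      by (simp add: algebra_simps)
  qed
  moreover have "(LINT x:A|M. \<alpha> + \<beta> * \<bar>u x - c\<bar>) = mA * t powr s"
  proof -
    have "(LINT x:A|M. \<alpha> + \<beta> * \<bar>u x - c\<bar>) = mA * \<alpha> + \<beta> * (mA * t)"
      using set_integral_const[OF A finne, of \<alpha>] int2 set_integrable_const_real[OF A fin, of \<alpha>]
      by (simp add: mA_def[symmetric] Lt[symmetric])
    also have "\<dots> = mA * t powr s" by (simp add: \<alpha>_def \<beta>_def algebra_simps)
    finally show ?thesis .
  qed
  ultimately have "mA * t powr s \<le> (LINT x:A|M. f x)" by simp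
  moreover have "\<bar>mu_avg M u A - c\<bar> powr s \<le> t powr s"
    by (rule powr_mono2) (use s avgt in auto)
  ultimately have "\<bar>mu_avg M u A - c\<bar> powr s * mA \<le> (LINT x:A|M. f x)"
    using mA0 by (smt (verit) mult.commute mult_left_mono)
  then show ?thesis
    unfolding RHS eA using mA0 by (simp add: ennreal_mult[symmetric] ennreal_leI)
qed

lemma open_sets_leb: "open (A::'a::euclidean_space set) \<Longrightarrow> A \<in> sets lebesgue"
  by (metis borel_open sets_completionI_sets sets_lborel)

lemma closed_sets_leb: "closed (A::'a::euclidean_space set) \<Longrightarrow> A \<in> sets lebesgue"
  by (metis borel_closed sets_completionI_sets sets_lborel)

lemma meas_from_cover:
  fixes f :: "'a::euclidean_space \<Rightarrow> real"
  assumes "open \<Omega>" "countable \<C>" "\<Union>\<C> = \<Omega>" "\<And>K. K \<in> \<C> \<Longrightarrow> K \<in> sets lebesgue"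
    "\<And>K. K \<in> \<C> \<Longrightarrow> (\<lambda>x. indicator K x * f x) \<in> borel_measurable lebesgue"
  shows "(\<lambda>x. indicator \<Omega> x * f x) \<in> borel_measurable lebesgue"
proof (rule measurable_piecewise_restrict[where C = "insert (-\<Omega>) \<C>"])
  show "countable (insert (-\<Omega>) \<C>)" using assms by simp
  show "K \<inter> space lebesgue \<in> sets lebesgue" if "K \<in> insert (-\<Omega>) \<C>" for K
    using that assms closed_sets_leb[of "-\<Omega>"] by auto
  show "space lebesgue \<subseteq> \<Union>(insert (-\<Omega>) \<C>)" using assms by auto
  show "(\<lambda>x. indicator \<Omega> x * f x) \<in> borel_measurable (restrict_space lebesgue K)"
    if K: "K \<in> insert (-\<Omega>) \<C>" for K
  proof (cases "K = -\<Omega>")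
    case True
    have "(\<lambda>x. indicator \<Omega> x * f x) \<in> borel_measurable (restrict_space lebesgue K)
          \<longleftrightarrow> (\<lambda>x. 0::real) \<in> borel_measurable (restrict_space lebesgue K)"
      by (rule measurable_cong) (auto simp: space_restrict_space True)
    then show ?thesis by simp
  next
    case False
    then have KC: "K \<in> \<C>" using K by auto
    then have sub: "K \<subseteq> \<Omega>" using assms(3) by auto
    have "(\<lambda>x. indicator \<Omega> x * f x) \<in> borel_measurable (restrict_space lebesgue K)
          \<longleftrightarrow> (\<lambda>x. indicator K x * f x) \<in> borel_measurable (restrict_space lebesgue K)"
      by (rule measurable_cong) (use sub in \<open>auto simp: space_restrict_space\<close>)
    then show ?thesis using measurable_restrict_space1[OF assms(5)[OF KC]] by simp
  qed
qed

lemma w_meas: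
  assumes Ar: "A_r_weight r \<Omega> w" and op: "open \<Omega>"
  shows "(\<lambda>x. indicator \<Omega> x * w x) \<in> borel_measurable lebesgue"
proof -
  have opF: "open S" if "S \<in> balls_in \<Omega>" for S
    using that unfolding balls_in_def by auto
  obtain F' where F': "F' \<subseteq> balls_in \<Omega>" "countable F'" "\<Union>F' = \<Union>(balls_in \<Omega>)"
    using Lindelof[OF opF] by blast
  have U: "\<Union>(balls_in \<Omega>) = \<Omega>"
  proof
    show "\<Union>(balls_in \<Omega>) \<subseteq> \<Omega>" unfolding balls_in_def by blast
    show "\<Omega> \<subseteq> \<Union>(balls_in \<Omega>)"
    proof
      fix x assume "x \<in> \<Omega>"
      then obtain e where e: "0 < e" "ball x e \<subseteq> \<Omega>" using op openE by blast
      then have "ball x e \<in> balls_in \<Omega>" unfolding balls_in_def by blast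
      moreover have "x \<in> ball x e" using e by simp
      ultimately show "x \<in> \<Union>(balls_in \<Omega>)" by blast
    qed
  qed
  show ?thesis
  proof (rule meas_from_cover[OF op F'(2)])
    show "\<Union>F' = \<Omega>" using F'(3) U by simp
    fix K assume "K \<in> F'"
    then have K: "K \<in> balls_in \<Omega>" using F'(1) by blast
    then show "K \<in> sets lebesgue" using opF open_sets_leb by blast
    have "set_integrable lebesgue K w" using Ar K unfolding A_r_weight_def by blast
    then show "(\<lambda>x. indicator K x * w x) \<in> borel_measurable lebesgue"
      unfolding set_integrable_def by (simp add: borel_measurable_integrable)
  qed
qed

lemma u_meas:
  fixes u :: "'a::euclidean_space \<Rightarrow> real"
  assumes L: "loc_integrable M \<Omega> u" and op: "open \<Omega>" and sM: "sets M = sets lebesgue"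
  shows "(\<lambda>x. indicator \<Omega> x * u x) \<in> borel_measurable lebesgue"
proof -
  obtain C :: "nat \<Rightarrow> 'a set" where C: "\<And>n. compact (C n)" "\<And>n. C n \<subseteq> \<Omega>" "\<Union>(range C) = \<Omega>"
  proof (rule open_Union_compact_subsets[OF op])
    fix C :: "nat \<Rightarrow> 'a set" assume h: "\<And>n. compact (C n)" "\<And>n. C n \<subseteq> \<Omega>" "\<Union>(range C) = \<Omega>"
    show thesis by (rule that[of C]) (simp_all add: h)
  qed
  show ?thesis
  proof (rule meas_from_cover[OF op _ C(3)])
    show "countable (range C)" by simp
    fix K assume "K \<in> range C"
    then obtain n where K: "K = C n" by blast
    show "K \<in> sets lebesgue" using K C(1) closed_sets_leb compact_imp_closed by blast
    have "compact K" "K \<subseteq> \<Omega>" using C(1,2) K by simp_all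
    then have "set_integrable M K u" using L unfolding loc_integrable_def by simp
    then have "(\<lambda>x. indicator K x * u x) \<in> borel_measurable M"
      unfolding set_integrable_def by (simp add: borel_measurable_integrable)
    then show "(\<lambda>x. indicator K x * u x) \<in> borel_measurable lebesgue"
      unfolding measurable_cong_sets[OF sM refl, of borel, symmetric] .
  qed
qed

lemma pos_meas:
  fixes \<Omega> A :: "'a::euclidean_space set"
  assumes Ar: "A_r_weight r \<Omega> w" and op: "open \<Omega>" and opA: "open A" and sub: "A \<subseteq> \<Omega>"
    and ne: "A \<noteq> {}"
  shows "0 < emeasure (weighted_measure \<Omega> w) A"
proof (rule ccontr)
  assume "\<not> 0 < emeasure (weighted_measure \<Omega> w) A"
  then have z: "emeasure (weighted_measure \<Omega> w) A = 0" by simp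
  have fm: "(\<lambda>x. ennreal (indicator \<Omega> x * w x)) \<in> borel_measurable lebesgue"
    by (rule measurable_compose[OF w_meas[OF Ar op] measurable_ennreal])
  have Al: "A \<in> sets lebesgue" using opA open_sets_leb by blast
  have fm2: "(\<lambda>x. ennreal (indicator \<Omega> x * w x) * indicator A x) \<in> borel_measurable lebesgue"
    using fm Al by (intro borel_measurable_times_ennreal) auto
  have "(\<integral>\<^sup>+x. ennreal (indicator \<Omega> x * w x) * indicator A x \<partial>lebesgue) = 0"
    using z emeasure_density[OF fm Al] unfolding weighted_measure_def by simp
  then have h1: "AE x in lebesgue. ennreal (indicator \<Omega> x * w x) * indicator A x = 0"
    using nn_integral_0_iff_AE[OF fm2] by simp
  have h2: "AE x in lebesgue. x \<in> \<Omega> \<longrightarrow> 0 < w x" using Ar unfolding A_r_weight_def by blast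
  have "AE x in lebesgue. x \<notin> A"
    using h1 h2
  proof eventually_elim
    case (elim x)
    show ?case
    proof
      assume xA: "x \<in> A"
      then have "x \<in> \<Omega>" using sub by blast
      then have "0 < w x" "indicator \<Omega> x = (1::real)" using elim(2) by simp_all
      then have "ennreal (indicator \<Omega> x * w x) * indicator A x \<noteq> 0" using xA by simp
      then show False using elim(1) by simp
    qed
  qed
  then have "A \<in> null_sets lebesgue" using AE_iff_null_sets[OF Al] by simp
  then have "negligible A" by (simp add: negligible_iff_null_sets)
  then show False using open_not_negligible[OF opA ne] by simp
qed

lemma chain_conn:
  fixes G :: "nat \<Rightarrow> 'a::topological_space set"
  assumes conn: "connected (\<Union>i\<in>I. G i)" and hG: "\<forall>i\<in>I. open (G i) \<and> G i \<noteq> {}"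
    and i0: "i0 \<in> I" and i: "i \<in> I"
  shows "(i0, i) \<in> {(a,b). a \<in> I \<and> b \<in> I \<and> G a \<inter> G b \<noteq> {}}\<^sup>*"
proof (rule ccontr)
  assume ni: "(i0, i) \<notin> {(a,b). a \<in> I \<and> b \<in> I \<and> G a \<inter> G b \<noteq> {}}\<^sup>*"
  define R where "R = {(a,b). a \<in> I \<and> b \<in> I \<and> G a \<inter> G b \<noteq> {}}"
  define J where "J = {j\<in>I. (i0, j) \<in> R\<^sup>*}"
  define U where "U = (\<Union>j\<in>J. G j)"
  define V where "V = (\<Union>j\<in>I-J. G j)"
  let ?S = "\<Union>i\<in>I. G i"
  have disj: "U \<inter> ?S = {} \<or> V \<inter> ?S = {}"
  proof (rule connectedD[OF conn])
    show "open U" using hG by (auto simp: U_def J_def)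
    show "open V" using hG by (auto simp: V_def)
    show "?S \<subseteq> U \<union> V" by (auto simp: U_def V_def)
    show "U \<inter> V \<inter> ?S = {}"
    proof (rule ccontr)
      assume "U \<inter> V \<inter> ?S \<noteq> {}"
      then obtain x a b where a: "a \<in> J" and b: "b \<in> I - J" and x: "x \<in> G a" "x \<in> G b"
        by (auto simp: U_def V_def)
      then have "(a, b) \<in> R" by (auto simp: R_def J_def)
      then have "(i0, b) \<in> R\<^sup>*" using a by (auto simp: J_def intro: rtrancl_into_rtrancl)
      then show False using b by (auto simp: J_def)
    qed
  qed
  have "i0 \<in> J" using i0 by (simp add: J_def)
  then have "G i0 \<subseteq> U \<inter> ?S" using i0 by (auto simp: U_def)
  moreover have "G i0 \<noteq> {}" using hG i0 by blast
  ultimately have n1: "U \<inter> ?S \<noteq> {}" by blast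
  have "i \<in> I - J" using ni i by (simp add: J_def R_def)
  then have "G i \<subseteq> V \<inter> ?S" using i by (auto simp: V_def)
  moreover have "G i \<noteq> {}" using hG i by blast
  ultimately have n2: "V \<inter> ?S \<noteq> {}" by blast
  show False using disj n1 n2 by blast
qed

lemma split_const:
  fixes u :: "'a \<Rightarrow> real"
  assumes s: "1 \<le> s" and u[measurable]: "u \<in> borel_measurable M" and E[measurable]: "E \<in> sets M"
  shows "(\<integral>\<^sup>+x\<in>E. ennreal (\<bar>u x - c\<bar> powr s) \<partial>M)
     \<le> ennreal (2 powr (s - 1)) * ((\<integral>\<^sup>+x\<in>E. ennreal (\<bar>u x - a\<bar> powr s) \<partial>M)
          + ennreal (\<bar>a - c\<bar> powr s) * emeasure M E)"
proof -
  have "(\<integral>\<^sup>+x\<in>E. ennreal (\<bar>u x - c\<bar> powr s) \<partial>M)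
      \<le> (\<integral>\<^sup>+x. ennreal (2 powr (s - 1)) * (ennreal (\<bar>u x - a\<bar> powr s) * indicator E x
            + ennreal (\<bar>a - c\<bar> powr s) * indicator E x) \<partial>M)"
  proof (rule nn_integral_mono)
    fix x
    have "\<bar>u x - c\<bar> powr s \<le> 2 powr (s - 1) * (\<bar>u x - a\<bar> powr s + \<bar>a - c\<bar> powr s)"
      by (rule convex2_powr[OF s])
    then have "ennreal (\<bar>u x - c\<bar> powr s) \<le> ennreal (2 powr (s - 1)) * (ennreal (\<bar>u x - a\<bar> powr s) + ennreal (\<bar>a - c\<bar> powr s))"
      by (simp add: ennreal_mult[symmetric] ennreal_plus[symmetric] del: ennreal_plus)
    then show "ennreal (\<bar>u x - c\<bar> powr s) * indicator E x
      \<le> ennreal (2 powr (s - 1)) * (ennreal (\<bar>u x - a\<bar> powr s) * indicator E x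
            + ennreal (\<bar>a - c\<bar> powr s) * indicator E x)"
      by (cases "x \<in> E") auto
  qed
  also have "\<dots> = ennreal (2 powr (s - 1)) * ((\<integral>\<^sup>+x\<in>E. ennreal (\<bar>u x - a\<bar> powr s) \<partial>M)
          + ennreal (\<bar>a - c\<bar> powr s) * emeasure M E)"
    by (simp add: nn_integral_cmult nn_integral_add nn_integral_cmult_indicator)
  finally show ?thesis .
qed

lemma pair_bound:
  fixes u :: "'a \<Rightarrow> real"
  assumes s: "1 \<le> s" and u[measurable]: "u \<in> borel_measurable M" and A[measurable]: "A \<in> sets M"
    and Gi[measurable]: "Gi \<in> sets M" and Gj[measurable]: "Gj \<in> sets M" and sub: "A \<subseteq> Gi" "A \<subseteq> Gj"
  shows "ennreal (\<bar>a - b\<bar> powr s) * emeasure M A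
     \<le> ennreal (2 powr (s - 1)) * ((\<integral>\<^sup>+x\<in>Gi. ennreal (\<bar>u x - a\<bar> powr s) \<partial>M)
          + (\<integral>\<^sup>+x\<in>Gj. ennreal (\<bar>u x - b\<bar> powr s) \<partial>M))"
proof -
  have "ennreal (\<bar>a - b\<bar> powr s) * emeasure M A = (\<integral>\<^sup>+x. ennreal (\<bar>a - b\<bar> powr s) * indicator A x \<partial>M)"
    by (simp add: nn_integral_cmult_indicator)
  also have "\<dots> \<le> (\<integral>\<^sup>+x. ennreal (2 powr (s - 1)) * (ennreal (\<bar>u x - a\<bar> powr s) * indicator Gi x
            + ennreal (\<bar>u x - b\<bar> powr s) * indicator Gj x) \<partial>M)"
  proof (rule nn_integral_mono)
    fix x
    have "\<bar>a - b\<bar> powr s \<le> 2 powr (s - 1) * (\<bar>a - u x\<bar> powr s + \<bar>u x - b\<bar> powr s)"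
      by (rule convex2_powr[OF s])
    then have "ennreal (\<bar>a - b\<bar> powr s) \<le> ennreal (2 powr (s - 1)) * (ennreal (\<bar>u x - a\<bar> powr s) + ennreal (\<bar>u x - b\<bar> powr s))"
      by (simp add: ennreal_mult[symmetric] ennreal_plus[symmetric] abs_minus_commute del: ennreal_plus)
    then show "ennreal (\<bar>a - b\<bar> powr s) * indicator A x
      \<le> ennreal (2 powr (s - 1)) * (ennreal (\<bar>u x - a\<bar> powr s) * indicator Gi x
            + ennreal (\<bar>u x - b\<bar> powr s) * indicator Gj x)"
    proof (cases "x \<in> A")
      case True
      then have "x \<in> Gi" "x \<in> Gj" using sub by auto
      then show ?thesis using True \<open>ennreal (\<bar>a - b\<bar> powr s) \<le> _\<close> by simp
    qed simp
  qed
  also have "\<dots> = ennreal (2 powr (s - 1)) * ((\<integral>\<^sup>+x\<in>Gi. ennreal (\<bar>u x - a\<bar> powr s) \<partial>M)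
          + (\<integral>\<^sup>+x\<in>Gj. ennreal (\<bar>u x - b\<bar> powr s) \<partial>M))"
    by (simp add: nn_integral_cmult nn_integral_add)
  finally show ?thesis .
qed

lemma sum_cover:
  fixes f :: "'a \<Rightarrow> ennreal"
  assumes I: "finite I" and f[measurable]: "f \<in> borel_measurable M"
    and G: "\<And>i. i \<in> I \<Longrightarrow> G i \<in> sets M"
  shows "(\<integral>\<^sup>+x\<in>(\<Union>i\<in>I. G i). f x \<partial>M) \<le> (\<Sum>i\<in>I. \<integral>\<^sup>+x\<in>G i. f x \<partial>M)"
proof -
  have "(\<integral>\<^sup>+x\<in>(\<Union>i\<in>I. G i). f x \<partial>M) \<le> (\<integral>\<^sup>+x. (\<Sum>i\<in>I. f x * indicator (G i) x) \<partial>M)"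
  proof (rule nn_integral_mono)
    fix x
    show "f x * indicator (\<Union>i\<in>I. G i) x \<le> (\<Sum>i\<in>I. f x * indicator (G i) x)"
    proof (cases "x \<in> (\<Union>i\<in>I. G i)")
      case True
      then obtain j where j: "j \<in> I" "x \<in> G j" by blast
      have "f x * indicator (\<Union>i\<in>I. G i) x = f x * indicator (G j) x" using True j by simp
      also have "\<dots> \<le> (\<Sum>i\<in>I. f x * indicator (G i) x)"
        by (rule member_le_sum[OF j(1)]) (use I in auto)
      finally show ?thesis .
    qed simp
  qed
  also have "\<dots> = (\<Sum>i\<in>I. \<integral>\<^sup>+x\<in>G i. f x \<partial>M)"
    by (rule nn_integral_sum) (use G in auto)
  finally show ?thesis .
qed

lemma ennreal_pab:
  "0 \<le> p \<Longrightarrow> 0 \<le> a \<Longrightarrow> 0 \<le> b \<Longrightarrow> ennreal p * (ennreal a + ennreal b) = ennreal (p * (a + b))"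
  by (simp add: ennreal_mult)

lemma root_bound:
  fixes x y :: real
  assumes s: "1 \<le> s" and y: "0 \<le> y" and h: "\<bar>x\<bar> powr s \<le> y"
  shows "\<bar>x\<bar> \<le> y powr (1 / s)"
proof -
  have "\<bar>x\<bar> = (\<bar>x\<bar> powr s) powr (1 / s)"
    using s by (simp add: powr_powr)
  also have "\<dots> \<le> y powr (1 / s)"
    by (rule powr_mono2) (use s h in auto)
  finally show ?thesis .
qed

lemma pow_bound:
  fixes x k S :: real
  assumes s: "1 \<le> s" and k: "0 \<le> k" and S: "0 \<le> S" and h: "\<bar>x\<bar> \<le> k * S powr (1 / s)"
  shows "\<bar>x\<bar> powr s \<le> k powr s * S"
proof -
  have "\<bar>x\<bar> powr s \<le> (k * S powr (1 / s)) powr s"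
    by (rule powr_mono2) (use s h in auto)
  also have "\<dots> = k powr s * (S powr (1 / s)) powr s"
    using k S by (simp add: powr_mult)
  also have "(S powr (1 / s)) powr s = S"
    using s S by (simp add: powr_powr)
  finally show ?thesis .
qed

lemma core:
  fixes M :: "'a::euclidean_space measure" and G :: "nat \<Rightarrow> 'a set" and \<kappa> :: "nat \<Rightarrow> real"
  assumes s: "1 \<le> s" and I: "finite I" "i0 \<in> I"
    and sM: "sets M = sets lebesgue"
    and opG: "\<forall>i\<in>I. open (G i)"
    and fin\<Omega>: "emeasure M (\<Union>i\<in>I. G i) < \<infinity>"
    and posG: "\<forall>i\<in>I. 0 < emeasure M (G i)"
    and posI: "\<forall>i\<in>I. \<forall>j\<in>I. G i \<inter> G j \<noteq> {} \<longrightarrow> 0 < emeasure M (G i \<inter> G j)"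
    and chain: "\<forall>i\<in>I. (i0, i) \<in> {(a,b). a \<in> I \<and> b \<in> I \<and> G a \<inter> G b \<noteq> {}}\<^sup>*"
    and \<kappa>: "\<forall>i\<in>I. 0 \<le> \<kappa> i"
  shows "\<exists>D\<ge>0. \<forall>u S. u \<in> borel_measurable M \<longrightarrow> 0 \<le> S \<longrightarrow>
      (\<forall>i\<in>I. (\<integral>\<^sup>+x\<in>G i. ennreal (\<bar>u x - mu_avg M u (G i)\<bar> powr s) \<partial>M) \<le> ennreal (\<kappa> i * S)) \<longrightarrow>
      (\<integral>\<^sup>+x\<in>(\<Union>i\<in>I. G i). ennreal (\<bar>u x - mu_avg M u (\<Union>i\<in>I. G i)\<bar> powr s) \<partial>M) \<le> ennreal (D * S)"
proof -
  define \<Omega> where "\<Omega> = (\<Union>i\<in>I. G i)"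
  define R where "R = {(a,b). a \<in> I \<and> b \<in> I \<and> G a \<inter> G b \<noteq> {}}"
  define p where "p = (2::real) powr (s - 1)"
  have p0: "0 < p" by (simp add: p_def)
  have setsG: "G i \<in> sets M" if "i \<in> I" for i
    using opG that sM open_sets_leb by auto
  have setsI: "G i \<inter> G j \<in> sets M" if "i \<in> I" "j \<in> I" for i j
    using setsG that by blast
  have GsubO: "G i \<subseteq> \<Omega>" if "i \<in> I" for i
    using that by (auto simp: \<Omega>_def)
  have setsO: "\<Omega> \<in> sets M"
    unfolding \<Omega>_def using setsG I(1) by blast
  have finO: "emeasure M \<Omega> < \<infinity>" using fin\<Omega> by (simp add: \<Omega>_def)
  have finG: "emeasure M (G i) < \<infinity>" if "i \<in> I" for i
    using emeasure_mono[OF GsubO[OF that] setsO] finO by (simp add: order_le_less_trans)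
  have finI: "emeasure M (G i \<inter> G j) < \<infinity>" if "i \<in> I" "j \<in> I" for i j
    using emeasure_mono[of "G i \<inter> G j" "G i"] setsG[OF that(1)] finG[OF that(1)]
    by (meson inf_le1 order_le_less_trans)
  define mG where "mG i = enn2real (emeasure M (G i))" for i
  have eG: "emeasure M (G i) = ennreal (mG i)" if "i \<in> I" for i
    using finG[OF that] by (simp add: mG_def)
  have mG0: "0 \<le> mG i" for i by (simp add: mG_def)
  define \<beta> where "\<beta> i j = enn2real (emeasure M (G i \<inter> G j))" for i j
  have eB: "emeasure M (G i \<inter> G j) = ennreal (\<beta> i j)" if "i \<in> I" "j \<in> I" for i j
    using finI[OF that] by (simp add: \<beta>_def)
  have \<beta>0: "0 < \<beta> i j" if "i \<in> I" "j \<in> I" "G i \<inter> G j \<noteq> {}" for i j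
    using posI that finI[OF that(1,2)] by (simp add: \<beta>_def enn2real_positive_iff)
  define E where "E i j = (p * (\<kappa> i + \<kappa> j) / \<beta> i j) powr (1 / s)" for i j
  define Em where "Em = (\<Sum>i\<in>I. \<Sum>j\<in>I. E i j)"
  have E0: "0 \<le> E i j" for i j by (simp add: E_def)
  have EleEm: "E i j \<le> Em" if "i \<in> I" "j \<in> I" for i j
  proof -
    have "E i j \<le> (\<Sum>j\<in>I. E i j)"
      by (rule member_le_sum[OF that(2)]) (use E0 I in auto)
    also have "\<dots> \<le> Em" unfolding Em_def
      by (rule member_le_sum[OF that(1)]) (use E0 I in \<open>auto intro: sum_nonneg\<close>)
    finally show ?thesis .
  qed
  have Em0: "0 \<le> Em" unfolding Em_def by (intro sum_nonneg) (simp add: E0)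
  define X where "X u i = (\<integral>\<^sup>+x\<in>G i. ennreal (\<bar>u x - mu_avg M u (G i)\<bar> powr s) \<partial>M)" for u i
  define A where "A u i = mu_avg M u (G i)" for u i
  define good where "good u S \<longleftrightarrow> u \<in> borel_measurable M \<and> 0 \<le> S \<and> (\<forall>i\<in>I. X u i \<le> ennreal (\<kappa> i * S))"
    for u and S :: real
  have pair: "\<bar>A u i - A u j\<bar> \<le> Em * S powr (1 / s)"
    if g: "good u S" and ij: "i \<in> I" "j \<in> I" "G i \<inter> G j \<noteq> {}" for u S i j
  proof -
    have um: "u \<in> borel_measurable M" and S0: "0 \<le> S" and hX: "\<forall>i\<in>I. X u i \<le> ennreal (\<kappa> i * S)"
      using g by (auto simp: good_def)
    have "ennreal (\<bar>A u i - A u j\<bar> powr s) * emeasure M (G i \<inter> G j)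
        \<le> ennreal p * (X u i + X u j)"
      unfolding X_def A_def p_def
      by (rule pair_bound[OF s um setsI[OF ij(1,2)] setsG[OF ij(1)] setsG[OF ij(2)]]) auto
    also have "\<dots> \<le> ennreal p * (ennreal (\<kappa> i * S) + ennreal (\<kappa> j * S))"
      using hX ij by (intro mult_left_mono add_mono) auto
    also have "\<dots> = ennreal (p * (\<kappa> i * S + \<kappa> j * S))"
      using p0 S0 \<kappa> ij by (intro ennreal_pab) auto
    finally have "ennreal (\<bar>A u i - A u j\<bar> powr s * \<beta> i j) \<le> ennreal (p * (\<kappa> i * S + \<kappa> j * S))"
      using eB[OF ij(1,2)] \<beta>0[OF ij] by (simp add: ennreal_mult)
    then have "\<bar>A u i - A u j\<bar> powr s * \<beta> i j \<le> p * (\<kappa> i * S + \<kappa> j * S)"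
      using p0 S0 \<kappa> ij by (subst (asm) ennreal_le_iff) auto
    then have hb: "\<bar>A u i - A u j\<bar> powr s \<le> p * (\<kappa> i + \<kappa> j) / \<beta> i j * S"
      using \<beta>0[OF ij] by (simp add: field_simps)
    have ki: "0 \<le> \<kappa> i" "0 \<le> \<kappa> j" using \<kappa> ij by auto
    have "\<bar>A u i - A u j\<bar> \<le> (p * (\<kappa> i + \<kappa> j) / \<beta> i j * S) powr (1 / s)"
      by (rule root_bound[OF s _ hb]) (use p0 S0 ki \<beta>0[OF ij] in \<open>auto intro!: mult_nonneg_nonneg divide_nonneg_nonneg\<close>)
    also have "\<dots> = E i j * S powr (1 / s)"
      unfolding E_def using p0 S0 \<kappa> ij \<beta>0[OF ij] by (subst powr_mult) auto
    also have "\<dots> \<le> Em * S powr (1 / s)"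
      by (rule mult_right_mono[OF EleEm[OF ij(1,2)]]) simp
    finally show ?thesis .
  qed
  have reach: "\<exists>k::nat. \<forall>u S. good u S \<longrightarrow> \<bar>A u i - A u i0\<bar> \<le> real k * (Em * S powr (1 / s))"
    if "(i0, i) \<in> R\<^sup>*" for i
    using that
  proof (induction rule: rtrancl_induct)
    case base
    show ?case by (rule exI[of _ 0]) simp
  next
    case (step i j)
    then obtain k where k: "\<forall>u S. good u S \<longrightarrow> \<bar>A u i - A u i0\<bar> \<le> real k * (Em * S powr (1 / s))"
      by blast
    have ij: "i \<in> I" "j \<in> I" "G i \<inter> G j \<noteq> {}" using step(2) by (auto simp: R_def)
    show ?case
    proof (rule exI[of _ "Suc k"], intro allI impI)
      fix u S assume g: "good u S"
      have "\<bar>A u j - A u i0\<bar> \<le> \<bar>A u i - A u j\<bar> + \<bar>A u i - A u i0\<bar>" by linarith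
      also have "\<dots> \<le> Em * S powr (1 / s) + real k * (Em * S powr (1 / s))"
        using pair[OF g ij] k g by (intro add_mono) auto
      also have "\<dots> = real (Suc k) * (Em * S powr (1 / s))" by (simp add: algebra_simps)
      finally show "\<bar>A u j - A u i0\<bar> \<le> real (Suc k) * (Em * S powr (1 / s))" .
    qed
  qed
  have "\<forall>i\<in>I. \<exists>k::nat. \<forall>u S. good u S \<longrightarrow> \<bar>A u i - A u i0\<bar> \<le> real k * (Em * S powr (1 / s))"
    using reach chain by (auto simp: R_def)
  then obtain kf where kf: "\<forall>i\<in>I. \<forall>u S. good u S \<longrightarrow> \<bar>A u i - A u i0\<bar> \<le> real (kf i) * (Em * S powr (1 / s))"
    by metis
  define ks where "ks = (\<Sum>i\<in>I. kf i)"
  have kfks: "kf i \<le> ks" if "i \<in> I" for i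
    unfolding ks_def by (rule member_le_sum[OF that]) (use I in auto)
  define Q where "Q = (\<Sum>i\<in>I. p * (\<kappa> i + (real ks * Em) powr s * mG i))"
  have Q0: "0 \<le> Q" unfolding Q_def using p0 \<kappa> mG0 by (intro sum_nonneg) auto
  show ?thesis
  proof (rule exI[of _ "2 * p * Q"], intro conjI allI impI)
    show "0 \<le> 2 * p * Q" using p0 Q0 by simp
    fix u :: "'a \<Rightarrow> real" and S :: real
    assume um: "u \<in> borel_measurable M" and S0: "0 \<le> S"
      and hX': "\<forall>i\<in>I. (\<integral>\<^sup>+x\<in>G i. ennreal (\<bar>u x - mu_avg M u (G i)\<bar> powr s) \<partial>M) \<le> ennreal (\<kappa> i * S)"
    have g: "good u S" using um S0 hX' by (simp add: good_def X_def)
    define c where "c = A u i0"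
    have ci: "\<bar>A u i - c\<bar> powr s \<le> (real ks * Em) powr s * S" if i: "i \<in> I" for i
    proof (rule pow_bound[OF s _ S0])
      show "0 \<le> real ks * Em" using Em0 by simp
      have "\<bar>A u i - c\<bar> \<le> real (kf i) * (Em * S powr (1 / s))"
        using kf i g by (simp add: c_def)
      also have "\<dots> \<le> real ks * (Em * S powr (1 / s))"
        using kfks[OF i] Em0 by (intro mult_right_mono) auto
      finally show "\<bar>A u i - c\<bar> \<le> real ks * Em * S powr (1 / s)" by (simp add: mult.assoc)
    qed
    have stepG: "(\<integral>\<^sup>+x\<in>G i. ennreal (\<bar>u x - c\<bar> powr s) \<partial>M)
        \<le> ennreal (p * (\<kappa> i + (real ks * Em) powr s * mG i) * S)" if i: "i \<in> I" for i
    proof -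
      have "(\<integral>\<^sup>+x\<in>G i. ennreal (\<bar>u x - c\<bar> powr s) \<partial>M)
          \<le> ennreal p * (X u i + ennreal (\<bar>A u i - c\<bar> powr s) * emeasure M (G i))"
        unfolding X_def A_def p_def by (rule split_const[OF s um setsG[OF i]])
      also have "\<dots> \<le> ennreal p * (ennreal (\<kappa> i * S) + ennreal ((real ks * Em) powr s * S * mG i))"
      proof (intro mult_left_mono add_mono)
        show "X u i \<le> ennreal (\<kappa> i * S)" using g i by (simp add: good_def)
        have "ennreal (\<bar>A u i - c\<bar> powr s) * emeasure M (G i) = ennreal (\<bar>A u i - c\<bar> powr s * mG i)"
          using eG[OF i] mG0 by (simp add: ennreal_mult)
        also have "\<dots> \<le> ennreal ((real ks * Em) powr s * S * mG i)"
          using ci[OF i] mG0 by (intro ennreal_leI mult_right_mono) auto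
        finally show "ennreal (\<bar>A u i - c\<bar> powr s) * emeasure M (G i) \<le> ennreal ((real ks * Em) powr s * S * mG i)" .
      qed simp
      also have "\<dots> = ennreal (p * (\<kappa> i * S + (real ks * Em) powr s * S * mG i))"
        using p0 S0 \<kappa> i mG0 by (intro ennreal_pab) auto
      also have "\<dots> = ennreal (p * (\<kappa> i + (real ks * Em) powr s * mG i) * S)"
        by (simp add: algebra_simps)
      finally show ?thesis .
    qed
    have um2: "(\<lambda>x. ennreal (\<bar>u x - c\<bar> powr s)) \<in> borel_measurable M" using um by measurable
    have LO: "(\<integral>\<^sup>+x\<in>\<Omega>. ennreal (\<bar>u x - c\<bar> powr s) \<partial>M) \<le> ennreal (Q * S)"
    proof -
      have "(\<integral>\<^sup>+x\<in>\<Omega>. ennreal (\<bar>u x - c\<bar> powr s) \<partial>M) \<le> (\<Sum>i\<in>I. \<integral>\<^sup>+x\<in>G i. ennreal (\<bar>u x - c\<bar> powr s) \<partial>M)"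
        unfolding \<Omega>_def by (rule sum_cover[OF I(1) um2 setsG])
      also have "\<dots> \<le> (\<Sum>i\<in>I. ennreal (p * (\<kappa> i + (real ks * Em) powr s * mG i) * S))"
        by (rule sum_mono) (rule stepG)
      also have "\<dots> = ennreal (\<Sum>i\<in>I. p * (\<kappa> i + (real ks * Em) powr s * mG i) * S)"
        using p0 \<kappa> mG0 S0 by (intro sum_ennreal) auto
      also have "(\<Sum>i\<in>I. p * (\<kappa> i + (real ks * Em) powr s * mG i) * S) = Q * S"
        unfolding Q_def by (simp add: sum_distrib_right)
      finally show ?thesis .
    qed
    have intO: "set_integrable M \<Omega> u"
      by (rule integrable_from_Ls[OF s um setsO finO, of c]) (use LO in \<open>auto simp: top.not_eq_extremum intro: le_less_trans\<close>)
    have posO: "0 < emeasure M \<Omega>"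
      using posG I(2) emeasure_mono[OF GsubO[OF I(2)] setsO] by (meson order_less_le_trans)
    have J: "ennreal (\<bar>mu_avg M u \<Omega> - c\<bar> powr s) * emeasure M \<Omega> \<le> ennreal (Q * S)"
      using jensen_set[OF s um setsO finO posO intO, of c] LO by (rule order_trans)
    have "(\<integral>\<^sup>+x\<in>\<Omega>. ennreal (\<bar>u x - mu_avg M u \<Omega>\<bar> powr s) \<partial>M)
        \<le> ennreal p * ((\<integral>\<^sup>+x\<in>\<Omega>. ennreal (\<bar>u x - c\<bar> powr s) \<partial>M)
            + ennreal (\<bar>c - mu_avg M u \<Omega>\<bar> powr s) * emeasure M \<Omega>)"
      unfolding p_def by (rule split_const[OF s um setsO])
    also have "\<dots> \<le> ennreal p * (ennreal (Q * S) + ennreal (Q * S))"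
      using LO J by (intro mult_left_mono add_mono) (auto simp: abs_minus_commute)
    also have "\<dots> = ennreal (2 * p * Q * S)"
      using p0 Q0 S0 by (subst ennreal_pab) (auto simp: algebra_simps)
    finally show "(\<integral>\<^sup>+x\<in>(\<Union>i\<in>I. G i). ennreal (\<bar>u x - mu_avg M u (\<Union>i\<in>I. G i)\<bar> powr s) \<partial>M)
        \<le> ennreal (2 * p * Q * S)" unfolding \<Omega>_def .
  qed
qed

lemma osc_cong:
  fixes u :: "'a \<Rightarrow> real"
  assumes "E \<subseteq> \<Omega>"
  shows "mu_osc M s u E = mu_osc M s (\<lambda>x. indicator \<Omega> x * u x) E"
proof -
  have avg: "mu_avg M u E = mu_avg M (\<lambda>x. indicator \<Omega> x * u x) E"
    unfolding mu_avg_def set_lebesgue_integral_def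
    by (rule arg_cong2[where f="(/)"], rule Bochner_Integration.integral_cong[OF refl])
       (use assms in \<open>auto split: split_indicator\<close>)
  show ?thesis
    unfolding mu_osc_def avg[symmetric]
    by (rule arg_cong2[where f="(/)"], rule nn_integral_cong)
       (use assms in \<open>auto split: split_indicator\<close>)
qed

lemma osc_times:
  assumes "0 < emeasure M E" "emeasure M E < \<infinity>"
  shows "(\<integral>\<^sup>+x\<in>E. ennreal (\<bar>u x - mu_avg M u E\<bar> powr s) \<partial>M) = mu_osc M s u E * emeasure M E"
  unfolding mu_osc_def using assms by (simp add: ennreal_divide_times)

lemma balls_in_mono: "A \<subseteq> B \<Longrightarrow> balls_in A \<subseteq> balls_in B"
  unfolding balls_in_def by blast

theorem mainTheorem12:
  fixes G :: "nat \<Rightarrow> 'a::euclidean_space set" and m :: nat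
    and s r :: real and w :: "'a \<Rightarrow> real"
  assumes "1 \<le> s" and "1 < r" and "1 \<le> m"
    and "connected (\<Union>i\<in>{1..m}. G i)"
    and "A_r_weight r (\<Union>i\<in>{1..m}. G i) w"
    and "\<forall>i\<in>{1..m}. Ls_averaging_domain (weighted_measure (\<Union>i\<in>{1..m}. G i) w) s (G i)"
  shows "Ls_averaging_domain (weighted_measure (\<Union>i\<in>{1..m}. G i) w) s (\<Union>i\<in>{1..m}. G i)"
proof -
  note s = assms(1)
  define I where "I = {1..m}"
  define \<Omega> where "\<Omega> = (\<Union>i\<in>I. G i)"
  define M where "M = weighted_measure \<Omega> w"
  have hyp: "\<forall>i\<in>I. Ls_averaging_domain M s (G i)" using assms(6) by (simp add: I_def \<Omega>_def M_def)
  have Ar: "A_r_weight r \<Omega> w" using assms(5) by (simp add: I_def \<Omega>_def)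
  have conn: "connected (\<Union>i\<in>I. G i)" using assms(4) by (simp add: I_def)
  have finI: "finite I" by (simp add: I_def)
  have oneI: "1 \<in> I" using assms(3) by (simp add: I_def)
  have opG: "\<forall>i\<in>I. open (G i)" and neG: "\<forall>i\<in>I. G i \<noteq> {}" and bdG: "\<forall>i\<in>I. bounded (G i)"
    using hyp by (auto simp: Ls_averaging_domain_def)
  have "\<forall>i\<in>I. \<exists>C::real. 0 \<le> C \<and> (\<forall>u. loc_integrable M (G i) u \<longrightarrow>
          mu_osc M s u (G i) \<le> ennreal (C powr s) * (SUP B\<in>balls_in (G i). mu_osc M s u B))"
  proof (rule ballI)
    fix i assume "i \<in> I"
    then have "Ls_averaging_domain M s (G i)" using hyp by simp
    then show "\<exists>C::real. 0 \<le> C \<and> (\<forall>u. loc_integrable M (G i) u \<longrightarrow>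
          mu_osc M s u (G i) \<le> ennreal (C powr s) * (SUP B\<in>balls_in (G i). mu_osc M s u B))"
      unfolding Ls_averaging_domain_def by (elim conjE)
  qed
  from bchoice[OF this] obtain K where K: "\<forall>i\<in>I. 0 \<le> K i \<and> (\<forall>u. loc_integrable M (G i) u \<longrightarrow>
          mu_osc M s u (G i) \<le> ennreal (K i powr s) * (SUP B\<in>balls_in (G i). mu_osc M s u B))"
    ..
  have opO: "open \<Omega>" unfolding \<Omega>_def using opG by blast
  have bdO: "bounded \<Omega>" unfolding \<Omega>_def using bdG finI by (simp add: bounded_UN)
  have neO: "\<Omega> \<noteq> {}" unfolding \<Omega>_def using neG oneI by blast
  have connO: "connected \<Omega>" using conn by (simp add: \<Omega>_def)
  have sM: "sets M = sets lebesgue" by (simp add: M_def weighted_measure_def)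
  have GsubO: "G i \<subseteq> \<Omega>" if "i \<in> I" for i using that by (auto simp: \<Omega>_def)
  have setsO: "\<Omega> \<in> sets M" using sM opO open_sets_leb by simp
  have main: "\<exists>C::real. 0 \<le> C \<and> (\<forall>u. loc_integrable M \<Omega> u \<longrightarrow>
        mu_osc M s u \<Omega> \<le> ennreal (C powr s) * (SUP B\<in>balls_in \<Omega>. mu_osc M s u B))"
  proof (cases "emeasure M \<Omega> = \<infinity>")
    case True
    show ?thesis
      by (rule exI[of _ 1]) (simp add: mu_osc_def True)
  next
    case False
    then have finO: "emeasure M \<Omega> < \<infinity>" by (simp add: top.not_eq_extremum)
    have posG: "\<forall>i\<in>I. 0 < emeasure M (G i)"
    proof (rule ballI)
      fix i assume i: "i \<in> I"
      show "0 < emeasure M (G i)"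
        unfolding M_def by (rule pos_meas[OF Ar opO]) (use opG neG GsubO[OF i] i in simp_all)
    qed
    have posI: "\<forall>i\<in>I. \<forall>j\<in>I. G i \<inter> G j \<noteq> {} \<longrightarrow> 0 < emeasure M (G i \<inter> G j)"
    proof (intro ballI impI)
      fix i j assume ij: "i \<in> I" "j \<in> I" "G i \<inter> G j \<noteq> {}"
      show "0 < emeasure M (G i \<inter> G j)"
        unfolding M_def by (rule pos_meas[OF Ar opO]) (use opG ij GsubO[OF ij(1)] in auto)
    qed
    have chain: "\<forall>i\<in>I. (1, i) \<in> {(a,b). a \<in> I \<and> b \<in> I \<and> G a \<inter> G b \<noteq> {}}\<^sup>*"
    proof (rule ballI)
      fix i assume i: "i \<in> I"
      have hG: "\<forall>i\<in>I. open (G i) \<and> G i \<noteq> {}" using opG neG by simp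
      show "(1, i) \<in> {(a,b). a \<in> I \<and> b \<in> I \<and> G a \<inter> G b \<noteq> {}}\<^sup>*"
        by (rule chain_conn[OF conn hG oneI i])
    qed
    define mG where "mG i = enn2real (emeasure M (G i))" for i
    have finG: "emeasure M (G i) < \<infinity>" if "i \<in> I" for i
      using emeasure_mono[OF GsubO[OF that] setsO] finO by (simp add: order_le_less_trans)
    have eG: "emeasure M (G i) = ennreal (mG i)" if "i \<in> I" for i
      using finG[OF that] by (simp add: mG_def)
    define \<kappa> where "\<kappa> i = K i powr s * mG i" for i
    have \<kappa>0: "\<forall>i\<in>I. 0 \<le> \<kappa> i" by (simp add: \<kappa>_def mG_def)
    have fin\<Omega>: "emeasure M (\<Union>i\<in>I. G i) < \<infinity>" using finO by (simp add: \<Omega>_def)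
    obtain D where D0: "0 \<le> D" and D: "\<forall>u S. u \<in> borel_measurable M \<longrightarrow> 0 \<le> S \<longrightarrow>
      (\<forall>i\<in>I. (\<integral>\<^sup>+x\<in>G i. ennreal (\<bar>u x - mu_avg M u (G i)\<bar> powr s) \<partial>M) \<le> ennreal (\<kappa> i * S)) \<longrightarrow>
      (\<integral>\<^sup>+x\<in>(\<Union>i\<in>I. G i). ennreal (\<bar>u x - mu_avg M u (\<Union>i\<in>I. G i)\<bar> powr s) \<partial>M) \<le> ennreal (D * S)"
      using core[OF s finI oneI sM opG fin\<Omega> posG posI chain \<kappa>0] by blast
    define mO where "mO = enn2real (emeasure M \<Omega>)"
    have eO: "emeasure M \<Omega> = ennreal mO" using finO by (simp add: mO_def)
    have posO: "0 < emeasure M \<Omega>"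
      using posG oneI emeasure_mono[OF GsubO[OF oneI] setsO] by (meson order_less_le_trans)
    have mO0: "0 < mO" using posO eO by simp
    define C where "C = (D / mO + 1) powr (1 / s)"
    have CD: "C powr s = D / mO + 1"
      unfolding C_def using s D0 mO0 by (simp add: powr_powr add_nonneg_pos)
    show ?thesis
    proof (rule exI[of _ C], intro conjI allI impI)
      show "0 \<le> C" by (simp add: C_def)
      fix u :: "'a \<Rightarrow> real" assume L: "loc_integrable M \<Omega> u"
      define S where "S = (SUP B\<in>balls_in \<Omega>. mu_osc M s u B)"
      have Cpos: "0 < C powr s" using CD D0 mO0 by (simp add: add_nonneg_pos)
      show "mu_osc M s u \<Omega> \<le> ennreal (C powr s) * (SUP B\<in>balls_in \<Omega>. mu_osc M s u B)"
      proof (cases "S = \<infinity>")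
        case True
        then show ?thesis using Cpos by (simp add: S_def[symmetric] ennreal_mult_eq_top_iff)
      next
        case False
        define Sr where "Sr = enn2real S"
        have eS: "S = ennreal Sr" using False by (simp add: Sr_def top.not_eq_extremum)
        have Sr0: "0 \<le> Sr" by (simp add: Sr_def)
        define uu where "uu x = indicator \<Omega> x * u x" for x
        have uu_eq: "uu = (\<lambda>x. indicator \<Omega> x * u x)" by (simp add: uu_def fun_eq_iff)
        have uum: "uu \<in> borel_measurable M"
          unfolding uu_def measurable_cong_sets[OF sM refl]
          by (rule u_meas[OF L opO sM])
        have Xi: "(\<integral>\<^sup>+x\<in>G i. ennreal (\<bar>uu x - mu_avg M uu (G i)\<bar> powr s) \<partial>M) \<le> ennreal (\<kappa> i * Sr)"
          if i: "i \<in> I" for i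
        proof -
          have Li: "loc_integrable M (G i) u"
            using L GsubO[OF i] unfolding loc_integrable_def by blast
          have "mu_osc M s u (G i) \<le> ennreal (K i powr s) * (SUP B\<in>balls_in (G i). mu_osc M s u B)"
          proof -
            have "\<forall>u. loc_integrable M (G i) u \<longrightarrow>
                mu_osc M s u (G i) \<le> ennreal (K i powr s) * (SUP B\<in>balls_in (G i). mu_osc M s u B)"
              using K i by simp
            then show ?thesis using Li by simp
          qed
          also have "\<dots> \<le> ennreal (K i powr s) * S"
            unfolding S_def
            by (intro mult_left_mono SUP_subset_mono balls_in_mono GsubO[OF i]) auto
          finally have oi: "mu_osc M s uu (G i) \<le> ennreal (K i powr s) * S"
            using osc_cong[OF GsubO[OF i], of M s u] by (simp add: uu_eq)
          have "(\<integral>\<^sup>+x\<in>G i. ennreal (\<bar>uu x - mu_avg M uu (G i)\<bar> powr s) \<partial>M)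
              = mu_osc M s uu (G i) * emeasure M (G i)"
            by (rule osc_times) (use posG finG i in auto)
          also have "\<dots> \<le> ennreal (K i powr s) * S * emeasure M (G i)"
            by (rule mult_right_mono[OF oi]) simp
          also have "\<dots> = ennreal (\<kappa> i * Sr)"
            unfolding eS eG[OF i] \<kappa>_def using Sr0 mG_def
            by (simp add: ennreal_mult[symmetric] mult_ac)
          finally show ?thesis .
        qed
        have "(\<integral>\<^sup>+x\<in>\<Omega>. ennreal (\<bar>uu x - mu_avg M uu \<Omega>\<bar> powr s) \<partial>M) \<le> ennreal (D * Sr)"
          unfolding \<Omega>_def by (rule D[rule_format, OF uum Sr0 Xi])
        have "mu_osc M s u \<Omega> = mu_osc M s uu \<Omega>"
          using osc_cong[of \<Omega> \<Omega> M s u] by (simp add: uu_eq)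
        also have "\<dots> = (\<integral>\<^sup>+x\<in>\<Omega>. ennreal (\<bar>uu x - mu_avg M uu \<Omega>\<bar> powr s) \<partial>M) / ennreal mO"
          unfolding mu_osc_def eO ..
        also have "\<dots> \<le> ennreal (D * Sr) / ennreal mO"
          by (rule divide_right_mono_ennreal) fact
        also have "\<dots> = ennreal (D * Sr / mO)"
          using D0 Sr0 mO0 by (simp add: divide_ennreal)
        also have "\<dots> \<le> ennreal ((D / mO + 1) * Sr)"
          using D0 Sr0 mO0 by (intro ennreal_leI) (simp add: field_simps)
        also have "\<dots> = ennreal (C powr s) * S"
          unfolding CD eS using Sr0 D0 mO0 by (simp add: ennreal_mult)
        finally show ?thesis by (simp add: S_def)
      qed
    qed
  qed
  have "Ls_averaging_domain M s \<Omega>"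
    unfolding Ls_averaging_domain_def by (intro conjI opO connO neO bdO main)
  then show ?thesis by (simp add: M_def \<Omega>_def I_def)
qed

end
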